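(* Let $M=\frac32-\sqrt2$. For real $f_1,f_2,f_3,y_1,y_2,y_3$ put $$\hat A=(1-f_1)(1-y_1)+(1-f_2)(1-y_2)+2(1-f_3)(1-y_3),\qquad \hat F_1=\frac{(1-f_1)(1-y_1)}{\hat A},$$ $$P_1=\frac{y_1(\frac12-y_1)}{1-y_1}-\frac{4Mf_2}{1-f_1},\quad P_2=(1-f_2)\,y_2(\tfrac12-y_2)+4Mf_1(1-y_2),\quad P_3=2(1-f_3)\,y_3(\tfrac12-y_3)+8M(f_1+f_2)(1-y_3),$$ and $$\hat\alpha(f_1,f_2,f_3,y_1,y_2,y_3)=\frac{1}{(\frac12-\hat F_1)\hat A}\Bigl(\hat A(1-\hat F_1)P_1+P_2+P_3\Bigr).$$ Then for all $f_1,f_2,f_3,y_1,y_2,y_3\in[0,\frac12]$ satisfying $f_1+f_2+2f_3=1$, $6f_1+f_2-1<0$, $4f_1+f_2-\frac34<0$, $\frac1{13}\le f_1\le\frac12$ and $0\le f_2,f_3\le\frac12$, we have $\hat\alpha(f_1,f_2,f_3,y_1,y_2,y_3)\le\frac{9163}{10000}$.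
   Context: In the paper's notation, with $\Phi(x)=\frac{1}{x(\frac12-x)}$, one has $y(\frac12-y)=1/\Phi(y)$ and $\frac{1}{(\frac12-\hat F_1)\hat A}=\frac{\Phi(\hat F_1)\hat F_1}{\hat A}$. Under the hypotheses $0<\hat F_1<\frac12$. *)

theory Defs
  imports Complex_Main
begin

definition M22 :: real where "M22 = 3/2 - sqrt 2"

definition Ahat :: "real \<Rightarrow> real \<Rightarrow> real \<Rightarrow> real \<Rightarrow> real \<Rightarrow> real \<Rightarrow> real" where
  "Ahat f1 f2 f3 y1 y2 y3 = (1-f1)*(1-y1) + (1-f2)*(1-y2) + 2*(1-f3)*(1-y3)"

definition F1hat :: "real \<Rightarrow> real \<Rightarrow> real \<Rightarrow> real \<Rightarrow> real \<Rightarrow> real \<Rightarrow> real" where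
  "F1hat f1 f2 f3 y1 y2 y3 = (1-f1)*(1-y1) / Ahat f1 f2 f3 y1 y2 y3"

definition P1 :: "real \<Rightarrow> real \<Rightarrow> real \<Rightarrow> real" where
  "P1 f1 f2 y1 = y1*(1/2 - y1)/(1-y1) - 4*M22*f2/(1-f1)"

definition P2 :: "real \<Rightarrow> real \<Rightarrow> real \<Rightarrow> real" where
  "P2 f1 f2 y2 = (1-f2)*y2*(1/2 - y2) + 4*M22*f1*(1-y2)"

definition P3 :: "real \<Rightarrow> real \<Rightarrow> real \<Rightarrow> real \<Rightarrow> real" where
  "P3 f1 f2 f3 y3 = 2*(1-f3)*y3*(1/2 - y3) + 8*M22*(f1+f2)*(1-y3)"

definition alphahat :: "real \<Rightarrow> real \<Rightarrow> real \<Rightarrow> real \<Rightarrow> real \<Rightarrow> real \<Rightarrow> real" where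
  "alphahat f1 f2 f3 y1 y2 y3 =
     (let A = Ahat f1 f2 f3 y1 y2 y3; F = F1hat f1 f2 f3 y1 y2 y3 in
      (1 / ((1/2 - F) * A)) * (A*(1-F)*P1 f1 f2 y1 + P2 f1 f2 y2 + P3 f1 f2 f3 y3))"

end

theory Submission
  imports Defs
begin


definition Qf :: "real \<Rightarrow> real \<Rightarrow> real" where
 "Qf a y = (2+a)*(1+a)*(y*(1/2-y) + (20837/20000)*(1-y))^2 + 24*(858/10000)*a*(y*(1/2-y) + (20837/20000)*(1-y))*(1-y)*(1+a) + 16*(858/10000)^2*a^2*(5+a)*(1-y)^2 + (-2*(2+a) + 2*(9163/10000)*(1-a)*(1-y))*(1-y)^2*(1+a)"

definition q2f :: "real \<Rightarrow> real" where
 "q2f y = (y*(1/2-y) + (20837/20000)*(1-y))^2 + 24*(858/10000)*(y*(1/2-y) + (20837/20000)*(1-y))*(1-y) + 80*(858/10000)^2*(1-y)^2 - (2 + 2*(9163/10000)*(1-y))*(1-y)^2"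

definition q3f :: "real \<Rightarrow> real" where
 "q3f y = 16*(858/10000)^2*(1-y)^2"

definition ff :: "real \<Rightarrow> real" where
 "ff a = 3*(20837/20000)*a*(1+a)*(2-5*a) - 2*(858/10000)*(-6*a*(1+a)*(2-5*a) + 2*a^2*(1-a)*(1+a)*(2-5*a) + 4*(1-3*a-5*a^2)*(1-a))"
lemma U1:
  fixes t :: real
  assumes "0 \<le> t" "t \<le> 1"
  shows "0 \<le> - Qf (1/13) ((1/2)*t)"
proof -
  have e: "- Qf (1/13) ((1/2)*t) = (1437857067/33800000000)*((1)*1 + (-5433361889/958571378)*t + (61960544267/11502856536)*t^2)^2 + (5231802067937457437/64799425152800000000)*((1)*t + (-47343404237684862037/20927208271749829748)*t^2)^2 + (3724409257939249103195401061/42440378375108654728944000000)*((1)*t^2)^2 + (142797/1000000)*(t*(1-t))*((1)*1 + (-495661/142797)*t)^2 + (5518171877/35699250000)*(t*(1-t))*((1)*t)^2"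
    unfolding Qf_def by algebra
  have "0 \<le> (1437857067/33800000000)*((1)*1 + (-5433361889/958571378)*t + (61960544267/11502856536)*t^2)^2 + (5231802067937457437/64799425152800000000)*((1)*t + (-47343404237684862037/20927208271749829748)*t^2)^2 + (3724409257939249103195401061/42440378375108654728944000000)*((1)*t^2)^2 + (142797/1000000)*(t*(1-t))*((1)*1 + (-495661/142797)*t)^2 + (5518171877/35699250000)*(t*(1-t))*((1)*t)^2"
    using assms by (intro add_nonneg_nonneg mult_nonneg_nonneg) auto
  then show ?thesis using e by simp
qed

lemma U2:
  fixes t :: real
  assumes "0 \<le> t" "t \<le> 1"
  shows "0 \<le> - Qf (1/6) ((1/2)*t)"
proof -
  have e: "- Qf (1/6) ((1/2)*t) = (460895423/4800000000)*((1)*1 + (-3970681423/921790846)*t + (13434001823/3687163384)*t^2)^2 + (757803184090618271/8849192121600000000)*((1)*t + (-7394807066639156271/3031212736362473084)*t^2)^2 + (12750222316495242519314321/218247317018098062048000000)*((1)*t^2)^2 + (20517/100000)*(t*(1-t))*((1)*1 + (-315331/102585)*t)^2 + (796790651/12823125000)*(t*(1-t))*((1)*t)^2"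
    unfolding Qf_def by algebra
  have "0 \<le> (460895423/4800000000)*((1)*1 + (-3970681423/921790846)*t + (13434001823/3687163384)*t^2)^2 + (757803184090618271/8849192121600000000)*((1)*t + (-7394807066639156271/3031212736362473084)*t^2)^2 + (12750222316495242519314321/218247317018098062048000000)*((1)*t^2)^2 + (20517/100000)*(t*(1-t))*((1)*1 + (-315331/102585)*t)^2 + (796790651/12823125000)*(t*(1-t))*((1)*t)^2"
    using assms by (intro add_nonneg_nonneg mult_nonneg_nonneg) auto
  then show ?thesis using e by simp
qed

lemma U3:
  fixes t :: real
  assumes "0 \<le> t" "t \<le> 1"
  shows "0 \<le> q2f ((1/2)*t) + q3f ((1/2)*t)*(2/13+1/6)"
proof -
  have e: "q2f ((1/2)*t) + q3f ((1/2)*t)*(2/13+1/6) = (9964857/400000000)*((1)*1 + (-120605257/19929714)*t + (311861657/79718856)*t^2)^2 + (80529614709184751/15943771200000000)*((1)*t + (-360981885552501151/322118458836739004)*t^2)^2 + (166771402110745039054523/1288473835346956016000000)*((1)*t^2)^2 + (1114313/500000)*(t*(1-t))*((1)*1 + (-3165303/2228626)*t)^2 + (1023235631803/445725200000)*(t*(1-t))*((1)*t)^2"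
    unfolding q2f_def q3f_def by algebra
  have "0 \<le> (9964857/400000000)*((1)*1 + (-120605257/19929714)*t + (311861657/79718856)*t^2)^2 + (80529614709184751/15943771200000000)*((1)*t + (-360981885552501151/322118458836739004)*t^2)^2 + (166771402110745039054523/1288473835346956016000000)*((1)*t^2)^2 + (1114313/500000)*(t*(1-t))*((1)*1 + (-3165303/2228626)*t)^2 + (1023235631803/445725200000)*(t*(1-t))*((1)*t)^2"
    using assms by (intro add_nonneg_nonneg mult_nonneg_nonneg) auto
  then show ?thesis using e by simp
qed

lemma U4:
  fixes s :: real
  assumes "0 \<le> s" "s \<le> 1"
  shows "0 \<le> ff (1/13 + (1/6-1/13)*s)"
proof -
  have e: "ff (1/13 + (1/6-1/13)*s) = (24030441/285610000)*((1)*1 + (-2789285777/320405880)*s + (68030156357/4806088200)*s^2 + (-213817981339/34603835040)*s^3)^2 + (9121967381097853439/1220148311824000000)*((1)*s + (-369330068504441435291/136829510716467801585)*s^2 + (60292389334456207951/36487869524391413756)*s^3)^2 + (5189038011187982797209457007/342073776791169503962500000)*((1)*s^2 + (-35810281338008358172915582281374795/32012088761708634960957449140616232)*s^3)^2 + (144903488966105953264885134046802577644887176637/296232314547903944690849448389265425497248000000)*((1)*s^3)^2 + (225873/100000)*(s*(1-s))*((1)*1 + (-7056107/2258730)*s + (4300921/2258730)*s^2)^2 + (39215175361001/2258730000000)*(s*(1-s))*((1)*s + (-51247114218433/39215175361001)*s^2)^2 + (206182720837908336753/39215175361001000000)*(s*(1-s))*((1)*s^2)^2"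
    unfolding ff_def by algebra
  have "0 \<le> (24030441/285610000)*((1)*1 + (-2789285777/320405880)*s + (68030156357/4806088200)*s^2 + (-213817981339/34603835040)*s^3)^2 + (9121967381097853439/1220148311824000000)*((1)*s + (-369330068504441435291/136829510716467801585)*s^2 + (60292389334456207951/36487869524391413756)*s^3)^2 + (5189038011187982797209457007/342073776791169503962500000)*((1)*s^2 + (-35810281338008358172915582281374795/32012088761708634960957449140616232)*s^3)^2 + (144903488966105953264885134046802577644887176637/296232314547903944690849448389265425497248000000)*((1)*s^3)^2 + (225873/100000)*(s*(1-s))*((1)*1 + (-7056107/2258730)*s + (4300921/2258730)*s^2)^2 + (39215175361001/2258730000000)*(s*(1-s))*((1)*s + (-51247114218433/39215175361001)*s^2)^2 + (206182720837908336753/39215175361001000000)*(s*(1-s))*((1)*s^2)^2"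
    using assms by (intro add_nonneg_nonneg mult_nonneg_nonneg) auto
  then show ?thesis using e by simp
qed

lemma Qf_chord: "Qf a y = ((1/6-a)*Qf (1/13) y + (a-1/13)*Qf (1/6) y)*(78/7) + (a-1/13)*(a-1/6)*(q3f y*(a+1/13+1/6) + q2f y)"
  unfolding Qf_def q2f_def q3f_def by algebra

lemma Qf_le0:
  assumes "1/13 \<le> a" "a \<le> 1/6" "0 \<le> y" "y \<le> 1/2"
  shows "Qf a y \<le> 0"
proof -
  have h1: "Qf (1/13) y \<le> 0" using U1[of "2*y"] assms by simp
  have h2: "Qf (1/6) y \<le> 0" using U2[of "2*y"] assms by simp
  have h3: "0 \<le> q2f y + q3f y*(2/13+1/6)" using U3[of "2*y"] assms by simp
  have q3: "0 \<le> q3f y" unfolding q3f_def by simp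
  have "q3f y*(2/13+1/6) \<le> q3f y*(a+1/13+1/6)" using q3 assms by (intro mult_left_mono) auto
  then have L: "0 \<le> q3f y*(a+1/13+1/6) + q2f y" using h3 by linarith
  have "(a-1/13)*(a-1/6) \<le> 0" using assms by (intro mult_nonneg_nonpos) auto
  then have p: "(a-1/13)*(a-1/6)*(q3f y*(a+1/13+1/6) + q2f y) \<le> 0"
    using L by (simp add: mult_nonpos_nonneg)
  have "(1/6-a)*Qf (1/13) y \<le> 0" using h1 assms by (intro mult_nonneg_nonpos) auto
  moreover have "(a-1/13)*Qf (1/6) y \<le> 0" using h2 assms by (intro mult_nonneg_nonpos) auto
  ultimately have "((1/6-a)*Qf (1/13) y + (a-1/13)*Qf (1/6) y)*(78/7) \<le> 0" by simp
  then show ?thesis using p Qf_chord[of a y] by linarith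
qed


lemma L1:
  fixes a :: real
  assumes "1/13 \<le> a" "a \<le> 1/6"
  shows "2*(858/10000)*(-6*a/(1-a) + 2*a^2 + 4*(1-3*a-5*a^2)/((1+a)*(2-5*a))) \<le> 3*(20837/20000)*a/(1-a)"
proof -
  have e: "1/13 + (1/6-1/13)*((a-1/13)*(78/7)) = (a::real)" by (simp add: field_simps)
  have "0 \<le> ff a" using U4[of "(a-1/13)*(78/7)"] assms by (simp only: e) simp
  moreover have "0 < 1-a" "0 < 1+a" "0 < 2-5*a" using assms by auto
  ultimately have "0 \<le> ff a / ((1-a)*(1+a)*(2-5*a))" by simp
  also have "ff a / ((1-a)*(1+a)*(2-5*a)) = 3*(20837/20000)*a/(1-a) - 2*(858/10000)*(-6*a/(1-a) + 2*a^2 + 4*(1-3*a-5*a^2)/((1+a)*(2-5*a)))"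
  proof -
    have h: "inverse(1-a)*(1-a) = 1" "inverse(1+a)*(1+a) = 1" "inverse(2-5*a)*(2-5*a) = 1"
      using \<open>0 < 1-a\<close> \<open>0 < 1+a\<close> \<open>0 < 2-5*a\<close> by auto
    show ?thesis unfolding ff_def divide_inverse inverse_mult_distrib using h by algebra
  qed
  finally show ?thesis by simp
qed

lemma fred:
  fixes a b M r0 :: real
  assumes a0: "1/13 \<le> a" and a1: "a \<le> 1/6" and b0: "0 \<le> b" and b1: "b \<le> 1/2" and ab: "6*a+b \<le> 1"
    and M0: "0 \<le> M" and M1: "M \<le> 858/10000" and r: "20837/20000 \<le> r0"
  shows "(2+a)*(r0 - 4*M*(b/(1-a)))^2 + 8*M*(3*a+2*b)*(r0 - 4*M*(b/(1-a))) + 16*M^2*(a^2/(1-b) + 4*(a+b)^2/(1+a+b))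
     \<le> (2+a)*r0^2 + 24*M*a*r0 + 16*M^2*(a^2*(5+a)/(1+a))"
proof -
  have p1: "0 < 1-a" "0 < 1+a" "0 < 1-b" "0 < 1+a+b" "0 < 2-5*a" using assms by auto
  have nz: "1-a \<noteq> 0" "1+a \<noteq> 0" "1-b \<noteq> 0" "1+a+b \<noteq> 0" "2-5*a \<noteq> 0" "a \<noteq> 1" "b \<noteq> 1" using p1 by auto
  define Y where "Y = (2+a)*b/(1-a)^2 - 2*(3*a+2*b)/(1-a) + a^2/(1-b) + 4*(2*a+b+a^2+a*b)/((1+a)*(1+a+b))"
  define Y2 where "Y2 = -6*a/(1-a) + 2*a^2 + 4*(1-3*a-5*a^2)/((1+a)*(2-5*a))"
  have id: "(2+a)*(r0 - 4*M*(b/(1-a)))^2 + 8*M*(3*a+2*b)*(r0 - 4*M*(b/(1-a))) + 16*M^2*(a^2/(1-b) + 4*(a+b)^2/(1+a+b))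
     - ((2+a)*r0^2 + 24*M*a*r0 + 16*M^2*(a^2*(5+a)/(1+a))) = -24*M*a*(b/(1-a))*r0 + 16*M^2*b*Y"
  proof -
    have h: "inverse(1-a)*(1-a) = 1" "inverse(1+a)*(1+a) = 1" "inverse(1-b)*(1-b) = 1" "inverse(1+a+b)*(1+a+b) = 1"
      using nz by auto
    show ?thesis unfolding Y_def divide_inverse inverse_mult_distrib power_inverse[symmetric] using h by algebra
  qed
  have t1: "(2+a)*b/(1-a)^2 - 2*(3*a+2*b)/(1-a) = b*(5*a-2)/(1-a)^2 - 6*a/(1-a)"
  proof -
    have h: "inverse(1-a)*(1-a) = 1" using nz by auto
    show ?thesis unfolding divide_inverse inverse_mult_distrib power_inverse[symmetric] using h by algebra
  qed
  have t2: "b*(5*a-2)/(1-a)^2 \<le> 0"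
    using b0 a1 by (intro divide_nonpos_nonneg mult_nonneg_nonpos) auto
  have t3: "a^2/(1-b) \<le> 2*a^2"
  proof -
    have "a^2/(1-b) \<le> a^2/(1/2)" using b1 p1 by (intro divide_left_mono) auto
    then show ?thesis by simp
  qed
  have t4: "4*(1-3*a-5*a^2)/((1+a)*(2-5*a)) - 4*(2*a+b+a^2+a*b)/((1+a)*(1+a+b)) = 4*(1-6*a-b)/((1+a)*(2-5*a)*(1+a+b))"
  proof -
    have h: "inverse(1+a)*(1+a) = 1" "inverse(2-5*a)*(2-5*a) = 1" "inverse(1+a+b)*(1+a+b) = 1"
      using nz by auto
    show ?thesis unfolding divide_inverse inverse_mult_distrib using h by algebra
  qed
  have t5: "0 \<le> 4*(1-6*a-b)/((1+a)*(2-5*a)*(1+a+b))" using p1 ab by simp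
  have YY: "Y \<le> Y2" unfolding Y_def Y2_def using t1 t2 t3 t4 t5 by linarith
  have L: "2*(858/10000)*Y2 \<le> 3*(20837/20000)*a/(1-a)" using L1[OF a0 a1] unfolding Y2_def .
  have neg1: "-24*M*a*(b/(1-a))*r0 \<le> 0"
  proof -
    have "0 \<le> 24*M*a*(b/(1-a))*r0" using M0 a0 b0 p1 r by simp
    then show ?thesis by simp
  qed
  have "16*M^2*b*Y \<le> 24*M*a*(b/(1-a))*r0"
  proof (cases "Y \<le> 0")
    case True
    then have "16*M^2*b*Y \<le> 0" using b0 by (simp add: mult_nonneg_nonpos)
    moreover have "0 \<le> 24*M*a*(b/(1-a))*r0" using M0 a0 b0 p1 r by simp
    ultimately show ?thesis by linarith
  next
    case False
    have "2*M*Y \<le> 2*(858/10000)*Y" using False M1 by (intro mult_right_mono) auto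
    also have "\<dots> \<le> 2*(858/10000)*Y2" using YY by simp
    also have "\<dots> \<le> 3*(20837/20000)*a/(1-a)" by (rule L)
    also have "\<dots> \<le> 3*r0*a/(1-a)" using r p1 a0 by (intro divide_right_mono mult_right_mono) auto
    finally have k: "2*M*Y \<le> 3*r0*a/(1-a)" .
    have "16*M^2*b*Y = (8*M*b)*(2*M*Y)" by (simp add: power2_eq_square)
    also have "\<dots> \<le> (8*M*b)*(3*r0*a/(1-a))" using k M0 b0 by (intro mult_left_mono) auto
    also have "\<dots> = 24*M*a*(b/(1-a))*r0" by simp
    finally show ?thesis .
  qed
  then show ?thesis using id by linarith
qed

lemma fin:
  fixes a y M :: real
  assumes a0: "1/13 \<le> a" and a1: "a \<le> 1/6" and y0: "0 \<le> y" and y1: "y \<le> 1/2"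
    and M0: "0 \<le> M" and M1: "M \<le> 858/10000"
  shows "(2+a)*(y*(1/2-y)/(1-y) + 20837/20000)^2 + 24*M*a*(y*(1/2-y)/(1-y) + 20837/20000)
     + 16*M^2*(a^2*(5+a)/(1+a)) - 2*(2+a) + 2*(9163/10000)*(1-a)*(1-y) \<le> 0"
proof -
  define r0 where "r0 = y*(1/2-y)/(1-y) + 20837/20000"
  have p: "0 < 1-y" "0 < 1+a" using assms by auto
  have nz: "1-y \<noteq> 0" "1+a \<noteq> 0" "y \<noteq> 1" using p by auto
  have g0: "0 \<le> y*(1/2-y)/(1-y)" using assms by simp
  have r0p: "0 \<le> r0" unfolding r0_def using g0 by simp
  have m1: "24*M*a*r0 \<le> 24*(858/10000)*a*r0" using M1 a0 r0p by (intro mult_right_mono) auto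
  have "M^2 \<le> (858/10000)^2" using M0 M1 by (intro power_mono) auto
  then have m2: "16*M^2*(a^2*(5+a)/(1+a)) \<le> 16*(858/10000)^2*(a^2*(5+a)/(1+a))"
    using a0 p by (intro mult_right_mono) auto
  have e: "(2+a)*r0^2 + 24*(858/10000)*a*r0 + 16*(858/10000)^2*(a^2*(5+a)/(1+a)) - 2*(2+a) + 2*(9163/10000)*(1-a)*(1-y)
     = Qf a y / ((1-y)^2*(1+a))"
  proof -
    have h: "inverse(1-y)*(1-y) = 1" "inverse(1+a)*(1+a) = 1" using nz by auto
    have d: "\<And>x. x/(1-y) = x*inverse(1-y)" "\<And>x. x/(1+a) = x*inverse(1+a)"
      "\<And>x. x/((1-y)^2*(1+a)) = x*inverse(1-y)^2*inverse(1+a)"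
      by (simp_all add: divide_inverse power_inverse)
    show ?thesis unfolding r0_def Qf_def d using h by algebra
  qed
  have "Qf a y / ((1-y)^2*(1+a)) \<le> 0" using Qf_le0[OF a0 a1 y0 y1] p by (simp add: divide_nonpos_pos)
  then show ?thesis using e m1 m2 unfolding r0_def[symmetric] by linarith
qed

lemma M22_bounds: "0 \<le> M22" "M22 \<le> 858/10000"
proof -
  have "sqrt 2 < 3/2" by (rule real_less_lsqrt) (auto simp: power2_eq_square)
  then show "0 \<le> M22" unfolding M22_def by simp
  have "14142/10000 \<le> sqrt 2" by (rule real_le_rsqrt) (simp add: power2_eq_square)
  then show "M22 \<le> 858/10000" unfolding M22_def by simp
qed

lemma comb_lin:
  fixes a x1 x2 x3 u1 u2 z w t v :: real
  assumes "a = x1+x2+x3" "x1 \<le> u1" "x2 \<le> u2" "4*(u1+u2) = z - w" "z \<le> t" "t - w + v \<le> 0" "v = 4*x3"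
  shows "a \<le> 0"
proof -
  have "4*a \<le> 4*(u1+u2) + 4*x3" using assms(1-3) by simp
  then show ?thesis using assms(4-7) by simp
qed

lemma phi_bound:
  fixes v y b :: real
  assumes "0 \<le> v"
  shows "v*((1-y)*b + y*(1/2-y)) \<le> v*((1/4)*b^2 + (3/4)*b + 1/16)"
proof -
  have "(1/4)*b^2 + (3/4)*b + 1/16 - ((1-y)*b + y*(1/2-y)) = (y + (1/2)*b - 1/4)^2"
    by algebra
  then have "(1-y)*b + y*(1/2-y) \<le> (1/4)*b^2 + (3/4)*b + 1/16"
    by (metis diff_ge_0_iff_ge zero_le_power2)
  then show ?thesis using assms by (rule mult_left_mono)
qed

lemma phi_id:
  fixes r M f1 f2 f3 :: real
  assumes "f1 + f2 + 2*f3 = 1" "1-f2 \<noteq> 0" "1-f3 \<noteq> 0"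
  shows "4*((1-f2)*((1/4)*(r - 3/2 + 4*M*f1/(1-f2))^2 + (3/4)*(r - 3/2 + 4*M*f1/(1-f2)) + 1/16)
          + 2*(1-f3)*((1/4)*(r - 3/2 + 4*M*(f1+f2)/(1-f3))^2 + (3/4)*(r - 3/2 + 4*M*(f1+f2)/(1-f3)) + 1/16))
     = (2+f1)*r^2 + 8*M*(3*f1+2*f2)*r + 16*M^2*(f1^2/(1-f2) + 4*(f1+f2)^2/(1+f1+f2)) - 2*(2+f1)"
proof -
  have nz: "1+f1+f2 \<noteq> 0" using assms by auto
  have h: "inverse(1-f2)*(1-f2) = 1" "inverse(1-f3)*(1-f3) = 1" "inverse(1+f1+f2)*(1+f1+f2) = 1"
    using assms nz by auto
  have d: "\<And>x. x/(1-f2) = x*inverse(1-f2)" "\<And>x. x/(1-f3) = x*inverse(1-f3)" "\<And>x. x/(1+f1+f2) = x*inverse(1+f1+f2)"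
    by (simp_all add: divide_inverse)
  show ?thesis unfolding d using h assms(1) by algebra
qed

theorem lemma22:
  fixes f1 f2 f3 y1 y2 y3 :: real
  assumes "f1 \<in> {0..1/2}" and "f2 \<in> {0..1/2}" and "f3 \<in> {0..1/2}"
    and "y1 \<in> {0..1/2}" and "y2 \<in> {0..1/2}" and "y3 \<in> {0..1/2}"
    and "f1 + f2 + 2*f3 = 1"
    and "6*f1 + f2 - 1 < 0"
    and "4*f1 + f2 - 3/4 < 0"
    and "1/13 \<le> f1" and "f1 \<le> 1/2"
    and "0 \<le> f2" and "f2 \<le> 1/2" and "0 \<le> f3" and "f3 \<le> 1/2"
  shows "alphahat f1 f2 f3 y1 y2 y3 \<le> 9163/10000"
proof -
  note M = M22_bounds
  have fs: "f1 + f2 + 2*f3 = 1" by fact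
  have ha0: "1/13 \<le> f1" and ha1: "f1 \<le> 1/6" and hab: "6*f1+f2 \<le> 1" using assms by auto
  have hy: "0 \<le> y1" "y1 \<le> 1/2" "0 \<le> y2" "y2 \<le> 1/2" "0 \<le> y3" "y3 \<le> 1/2" using assms by auto
  define A1 where "A1 = (1-f1)*(1-y1)"
  define A2 where "A2 = (1-f2)*(1-y2)"
  define A3 where "A3 = 2*(1-f3)*(1-y3)"
  define D where "D = A2 + A3 - A1"
  define N where "N = (A2+A3)*P1 f1 f2 y1 + P2 f1 f2 y2 + P3 f1 f2 f3 y3"
  have Aeq: "Ahat f1 f2 f3 y1 y2 y3 = A1 + A2 + A3" unfolding Ahat_def A1_def A2_def A3_def by simp
  have A1p: "0 < A1" unfolding A1_def using ha1 hy by simp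
  have A2p: "0 < A2" unfolding A2_def using assms hy by simp
  have A3p: "0 < A3" unfolding A3_def using assms hy by simp
  have "(1-f2)*(1/2) \<le> A2" unfolding A2_def using assms hy by (intro mult_left_mono) auto
  moreover have "2*(1-f3)*(1/2) \<le> A3" unfolding A3_def using assms hy by (intro mult_left_mono) auto
  moreover have "A1 \<le> (1-f1)*1" unfolding A1_def using ha1 hy by (intro mult_left_mono) auto
  ultimately have "1/2 - f2/2 \<le> A2" "1 - f3 \<le> A3" "A1 \<le> 1 - f1" by (simp_all add: algebra_simps)
  then have Dp: "0 < D" unfolding D_def using fs ha0 by linarith
  have Ap: "0 < A1 + A2 + A3" using A1p A2p A3p by simp
  have e1: "(1/2 - A1/(A1+A2+A3))*(A1+A2+A3) = D/2" using Ap unfolding D_def by (simp add: field_simps)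
  have e2: "(A1+A2+A3)*(1 - A1/(A1+A2+A3)) = A2+A3" using Ap by (simp add: field_simps)
  have Fe: "F1hat f1 f2 f3 y1 y2 y3 = A1/(A1+A2+A3)" unfolding F1hat_def Aeq A1_def ..
  have "alphahat f1 f2 f3 y1 y2 y3 = (1/((1/2 - A1/(A1+A2+A3))*(A1+A2+A3)))*((A1+A2+A3)*(1 - A1/(A1+A2+A3))*P1 f1 f2 y1 + P2 f1 f2 y2 + P3 f1 f2 f3 y3)"
    unfolding alphahat_def Let_def Fe Aeq ..
  also have "\<dots> = 2*N/D" unfolding e1 e2 N_def by simp
  finally have aeq: "alphahat f1 f2 f3 y1 y2 y3 = 2*N/D" .
  define g where "g = y1*(1/2-y1)/(1-y1)"
  define H where "H = f2/(1-f1)"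
  define r0 where "r0 = g + 20837/20000"
  define r where "r = r0 - 4*M22*H"
  have P1e: "P1 f1 f2 y1 = r - 20837/20000" unfolding P1_def r_def r0_def g_def H_def by simp
  define b2 where "b2 = r - 3/2 + 4*M22*f1/(1-f2)"
  define b3 where "b3 = r - 3/2 + 4*M22*(f1+f2)/(1-f3)"
  have nz: "1-f2 \<noteq> 0" "1-f3 \<noteq> 0" using assms by auto
  have Tid: "N - (9163/20000)*D = (1-f2)*((1-y2)*b2 + y2*(1/2-y2)) + 2*(1-f3)*((1-y3)*b3 + y3*(1/2-y3))
      + (9163/20000)*(1-f1)*(1-y1)"
  proof -
    have h: "inverse(1-f2)*(1-f2) = 1" "inverse(1-f3)*(1-f3) = 1" using nz by auto
    have d: "\<And>x. x/(1-f2) = x*inverse(1-f2)" "\<And>x. x/(1-f3) = x*inverse(1-f3)"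
      by (simp_all add: divide_inverse)
    show ?thesis unfolding N_def D_def A1_def A2_def A3_def P1e P2_def P3_def b2_def b3_def d
      using h by algebra
  qed
  have T1: "(1-f2)*((1-y2)*b2 + y2*(1/2-y2)) \<le> (1-f2)*((1/4)*b2^2 + (3/4)*b2 + 1/16)"
    using assms by (intro phi_bound) auto
  have T2: "2*(1-f3)*((1-y3)*b3 + y3*(1/2-y3)) \<le> 2*(1-f3)*((1/4)*b3^2 + (3/4)*b3 + 1/16)"
    using assms by (intro phi_bound) auto
  have R: "4*((1-f2)*((1/4)*b2^2 + (3/4)*b2 + 1/16) + 2*(1-f3)*((1/4)*b3^2 + (3/4)*b3 + 1/16))
     = (2+f1)*r^2 + 8*M22*(3*f1+2*f2)*r + 16*M22^2*(f1^2/(1-f2) + 4*(f1+f2)^2/(1+f1+f2)) - 2*(2+f1)"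
    unfolding b2_def b3_def using phi_id[OF fs nz] by (simp add: mult.assoc)
  have g0: "0 \<le> g" unfolding g_def using hy by simp
  have F: "(2+f1)*(r0 - 4*M22*(f2/(1-f1)))^2 + 8*M22*(3*f1+2*f2)*(r0 - 4*M22*(f2/(1-f1)))
      + 16*M22^2*(f1^2/(1-f2) + 4*(f1+f2)^2/(1+f1+f2))
     \<le> (2+f1)*r0^2 + 24*M22*f1*r0 + 16*M22^2*(f1^2*(5+f1)/(1+f1))"
    using fred[OF ha0 ha1 \<open>0 \<le> f2\<close> \<open>f2 \<le> 1/2\<close> hab M(1) M(2)] g0 unfolding r0_def by simp
  have G: "(2+f1)*r0^2 + 24*M22*f1*r0 + 16*M22^2*(f1^2*(5+f1)/(1+f1)) - 2*(2+f1)
      + 2*(9163/10000)*(1-f1)*(1-y1) \<le> 0"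
    using fin[OF ha0 ha1 hy(1) hy(2) M(1) M(2)] unfolding r0_def g_def by simp
  have "N - (9163/20000)*D \<le> 0"
  proof -
    have k: "2*(9163/10000)*(1-f1)*(1-y1) = 4*((9163/20000)*(1-f1)*(1-y1))" by simp
    show ?thesis by (rule comb_lin[OF Tid T1 T2 R[unfolded r_def H_def] F G k])
  qed
  then have "2*N \<le> (9163/10000)*D" by linarith
  then show ?thesis unfolding aeq using Dp by (simp add: pos_divide_le_eq)
qed
end
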